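(* Let $v\ge 2$ and $k\ge 3$ be integers with $v\not\equiv 2\pmod 4$. Then there exists an AOA$(1,k-1,k,v)$.
   Context: An orthogonal array OA$(t,k,v)$ (with $1\le t\le k$) is a $v^t\times k$ array with entries from a set $X$ of size $v$ such that, for every choice of $t$ of its columns, each $t$-tuple in $X^t$ appears exactly once as a row of the corresponding $v^t\times t$ subarray. For integers $1\le s\le t\le k$, an augmented orthogonal array AOA$(s,t,k,v)$ is a $v^t\times(k+1)$ array $A$ such that: (1) the first $k$ columns of $A$ form an OA$(t,k,v)$ on a symbol set $X$ of size $v$; (2) the last column of $A$ has entries from a set $Y$ of size $v^{t-s}$; (3) for any choice of $s$ of the first $k$ columns, these $s$ columns together with the last column contain every $(s+1)$-tuple of $X^s\times Y$ exactly once as a row. *)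

theory Defs
  imports "HOL-Library.FuncSet"
begin

text \<open>An array with N rows and k columns is represented by a function
  A :: nat => nat => 'a, where A i c is the entry in row i < N, column c < k.
  A t-tuple indexed by a set C of t columns is a function in C ->E X.\<close>

definition is_OA :: "nat \<Rightarrow> nat \<Rightarrow> nat \<Rightarrow> 'a set \<Rightarrow> (nat \<Rightarrow> nat \<Rightarrow> 'a) \<Rightarrow> bool" where
  "is_OA t k v X A \<longleftrightarrow>
     1 \<le> t \<and> t \<le> k \<and> finite X \<and> card X = v \<and>
     (\<forall>i < v ^ t. \<forall>c < k. A i c \<in> X) \<and>
     (\<forall>C. C \<subseteq> {0..<k} \<and> card C = t \<longrightarrow>
        (\<forall>f \<in> C \<rightarrow>\<^sub>E X. \<exists>!i. i < v ^ t \<and> (\<forall>c\<in>C. A i c = f c)))"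

text \<open>Augmented orthogonal array AOA(s,t,k,v): the v^t x (k+1) array whose first
  k columns are given by A (over X) and whose last column is L (over Y).\<close>

definition is_AOA :: "nat \<Rightarrow> nat \<Rightarrow> nat \<Rightarrow> nat \<Rightarrow> 'a set \<Rightarrow> 'b set
    \<Rightarrow> (nat \<Rightarrow> nat \<Rightarrow> 'a) \<Rightarrow> (nat \<Rightarrow> 'b) \<Rightarrow> bool" where
  "is_AOA s t k v X Y A L \<longleftrightarrow>
     1 \<le> s \<and> s \<le> t \<and> t \<le> k \<and>
     is_OA t k v X A \<and>
     finite Y \<and> card Y = v ^ (t - s) \<and>
     (\<forall>i < v ^ t. L i \<in> Y) \<and>
     (\<forall>C. C \<subseteq> {0..<k} \<and> card C = s \<longrightarrow>
        (\<forall>f \<in> C \<rightarrow>\<^sub>E X. \<forall>y \<in> Y.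
           \<exists>!i. i < v ^ t \<and> (\<forall>c\<in>C. A i c = f c) \<and> L i = y))"

end

theory Submission
  imports Defs "HOL-Library.Function_Algebras"
begin


lemma sum_fun_apply: "(\<Sum>c\<in>A. f c) (i::'b) = (\<Sum>c\<in>A. (f c i :: 'a::comm_monoid_add))"
  by (induction A rule: infinite_finite_induct) auto


lemma odd_double_inj: "odd m \<Longrightarrow> 0 \<le> x \<Longrightarrow> x < int m \<Longrightarrow> 0 \<le> y \<Longrightarrow> y < int m \<Longrightarrow>
   (x + x) mod int m = (y + y) mod int m \<Longrightarrow> x = y"
proof -
  assume h: "odd m" "0 \<le> x" "x < int m" "0 \<le> y" "y < int m" "(x + x) mod int m = (y + y) mod int m"
  have "int m dvd (x + x) - (y + y)" using h(6) by (simp add: mod_eq_dvd_iff)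
  then have "int m dvd 2 * (x - y)" by (simp add: algebra_simps)
  moreover have "coprime (int m) 2" using h(1) by simp
  ultimately have "int m dvd (x - y)" using coprime_dvd_mult_right_iff by blast
  then obtain q where "x - y = int m * q" by (auto simp: dvd_def)
  moreover have "q = 0"
  proof (rule ccontr)
    assume "q \<noteq> 0"
    then have "1 \<le> \<bar>q\<bar>" by simp
    then have "int m * 1 \<le> int m * \<bar>q\<bar>" by (intro mult_left_mono) auto
    then have "int m \<le> \<bar>x - y\<bar>" using \<open>x - y = int m * q\<close> by (simp add: abs_mult)
    then show False using h by auto
  qed
  ultimately show "x = y" by simp
qed
lemma bit2: "x \<in> {0,1::int} \<Longrightarrow> y \<in> {0,1} \<Longrightarrow> x' \<in> {0,1} \<Longrightarrow> y' \<in> {0,1} \<Longrightarrow>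
  (x + y) mod 2 = (x' + y') mod 2 \<Longrightarrow> (x = x' \<longleftrightarrow> y = y')" by auto
lemma bit3: "x \<in> {0,1::int} \<Longrightarrow> y \<in> {0,1} \<Longrightarrow> z \<in> {0,1} \<Longrightarrow> x' \<in> {0,1} \<Longrightarrow> y' \<in> {0,1} \<Longrightarrow> z' \<in> {0,1} \<Longrightarrow>
  x \<noteq> x' \<Longrightarrow> y \<noteq> y' \<Longrightarrow> z \<noteq> z' \<Longrightarrow> (x + (y + z) mod 2) mod 2 \<noteq> (x' + (y' + z') mod 2) mod 2" by auto

locale OM =
  fixes m e :: nat
  assumes m_odd: "odd m" and e_ne1: "e \<noteq> 1"
begin

definition md :: "nat \<Rightarrow> int" where "md i = (if i = 0 then int m else 2)"
definition I :: "nat set" where "I = {..e}"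
definition X :: "(nat \<Rightarrow> int) set" where "X = PiE I (\<lambda>i. {0..<md i})"
definition red :: "(nat \<Rightarrow> int) \<Rightarrow> (nat \<Rightarrow> int)" where
  "red x = restrict (\<lambda>i. x i mod md i) I"
definition th :: "(nat \<Rightarrow> int) \<Rightarrow> (nat \<Rightarrow> int)" where
  "th a = restrict (\<lambda>i. if i = 0 then a 0 else if i < e then a (Suc i) else (a 1 + a 2) mod 2) I"
definition sg :: "(nat \<Rightarrow> int) \<Rightarrow> (nat \<Rightarrow> int)" where "sg a = red (a + th a)"

lemma md_pos: "md i > 0"
  using m_odd by (auto simp: md_def intro!: Nat.gr0I)

lemma red_X: "red x \<in> X"
  using md_pos by (auto simp: red_def X_def)

lemma X_mem: "a \<in> X \<Longrightarrow> i \<le> e \<Longrightarrow> 0 \<le> a i \<and> a i < md i"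
  by (auto simp: X_def I_def PiE_iff)

lemma X_out: "a \<in> X \<Longrightarrow> \<not> i \<le> e \<Longrightarrow> a i = undefined"
  by (auto simp: X_def I_def PiE_iff extensional_def)

lemma red_id: "a \<in> X \<Longrightarrow> red a = a"
proof (rule ext)
  fix i assume a: "a \<in> X"
  show "red a i = a i"
    using X_mem[OF a, of i] X_out[OF a, of i] by (auto simp: red_def I_def)
qed

lemma red_eqI: "(\<And>i. i \<in> I \<Longrightarrow> x i mod md i = y i mod md i) \<Longrightarrow> red x = red y"
  by (auto simp: red_def)

lemma red_add_left: "red (red u + w) = red (u + w)"
  by (rule red_eqI) (simp add: red_def mod_add_left_eq)
lemma red_add_right: "red (u + red w) = red (u + w)"
  by (rule red_eqI) (simp add: red_def mod_add_right_eq)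
lemma red_neg: "red (- red u) = red (- u)"
  by (rule red_eqI) (simp add: red_def mod_minus_eq)
lemma red_diff_left: "red (red u - w) = red (u - w)"
  by (rule red_eqI) (simp add: red_def mod_diff_left_eq)
lemma red_diff_right: "red (u - red w) = red (u - w)"
  by (rule red_eqI) (simp add: red_def mod_diff_right_eq)
lemma red_sum: "red (\<Sum>c\<in>A. red (f c)) = red (\<Sum>c\<in>A. f c)"
  by (rule red_eqI) (simp add: red_def sum_fun_apply mod_sum_eq)

lemma finite_X: "finite X"
  by (auto simp: X_def I_def intro!: finite_PiE)

lemma prod_md: "(\<Prod>i\<in>{..n}. nat (md i)) = m * 2 ^ n"
  by (induction n) (auto simp: md_def)

lemma card_X: "card X = m * 2 ^ e"
  unfolding X_def I_def using md_pos by (simp add: card_PiE prod_md)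

lemma X_01: "a \<in> X \<Longrightarrow> 0 < i \<Longrightarrow> i \<le> e \<Longrightarrow> a i = 0 \<or> a i = 1"
  using X_mem[of a i] by (auto simp: md_def)
lemma X_0: "a \<in> X \<Longrightarrow> 0 \<le> a 0 \<and> a 0 < int m"
  using X_mem[of a 0] by (auto simp: md_def)

lemma X_eqI: "a \<in> X \<Longrightarrow> b \<in> X \<Longrightarrow> (\<And>i. i \<le> e \<Longrightarrow> a i = b i) \<Longrightarrow> a = b"
  using X_out[of a] X_out[of b] by (metis ext)

lemma bij_endo: "(\<And>a. a \<in> X \<Longrightarrow> f a \<in> X) \<Longrightarrow> inj_on f X \<Longrightarrow> bij_betw f X X"
  unfolding bij_betw_def using endo_inj_surj[OF finite_X] by blast

lemma th_X: assumes a: "a \<in> X" shows "th a \<in> X"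
  unfolding th_def X_def
proof (rule iffD2[OF restrict_PiE_iff], rule ballI)
  fix i assume i: "i \<in> I"
  show "(if i = 0 then a 0 else if i < e then a (Suc i) else (a 1 + a 2) mod 2) \<in> {0..<md i}"
    using i X_0[OF a] X_mem[OF a, of "Suc i"] by (auto simp: md_def I_def)
qed

lemma th_inj: "inj_on th X"
proof (rule inj_onI)
  fix a b assume a: "a \<in> X" and b: "b \<in> X" and eq: "th a = th b"
  have c: "i \<le> e \<Longrightarrow> th a i = th b i" for i using eq by simp
  show "a = b"
  proof (rule X_eqI[OF a b])
    fix i assume i: "i \<le> e"
    show "a i = b i"
    proof (cases "i = 0")
      case True then show ?thesis using c[of 0] by (simp add: th_def I_def)
    next
      case False
      have e2: "e \<ge> 2" using i False e_ne1 by auto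
      have s: "a j = b j" if "2 \<le> j" "j \<le> e" for j
        using c[of "j - 1"] that by (cases j) (auto simp: th_def I_def)
      show ?thesis
      proof (cases "i = 1")
        case True
        have "(a 1 + a 2) mod 2 = (b 1 + b 2) mod 2"
          using c[of e] e2 by (simp add: th_def I_def)
        moreover have "a 2 = b 2" using s e2 by auto
        ultimately show ?thesis using X_01[OF a, of 1] X_01[OF b, of 1] e2 True by (auto; presburger)
      next
        case False then show ?thesis using s i \<open>i \<noteq> 0\<close> by auto
      qed
    qed
  qed
qed

lemma X_bit: "a \<in> X \<Longrightarrow> 0 < i \<Longrightarrow> i \<le> e \<Longrightarrow> a i \<in> {0,1}"
  using X_01 by auto

lemma sg_inj: "inj_on sg X"
proof (rule inj_onI)
  fix a b assume a: "a \<in> X" and b: "b \<in> X" and eq: "sg a = sg b"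
  have c: "(a i + th a i) mod md i = (b i + th b i) mod md i" if "i \<le> e" for i
    using fun_cong[OF eq, of i] that by (simp add: sg_def red_def I_def)
  have "(a 0 + a 0) mod int m = (b 0 + b 0) mod int m"
    using c[of 0] by (simp add: th_def I_def md_def)
  then have a0: "a 0 = b 0"
    using X_0[OF a] X_0[OF b] odd_double_inj[OF m_odd] by blast
  show "a = b"
  proof (cases "e = 0")
    case True
    then show ?thesis using a0 by (intro X_eqI[OF a b]) auto
  next
    case False
    then have e2: "e \<ge> 2" using e_ne1 by auto
    have cl: "n < e \<Longrightarrow> (a (e - n) = b (e - n) \<longleftrightarrow> a e = b e)" for n
    proof (induction n)
      case 0 then show ?case by simp
    next
      case (Suc n)
      define i where "i = e - Suc n"
      have i: "0 < i" "i < e" "Suc i = e - n" using Suc.prems by (auto simp: i_def)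
      have "(a i + a (Suc i)) mod 2 = (b i + b (Suc i)) mod 2"
        using c[of i] i by (simp add: th_def I_def md_def)
      moreover have "a i \<in> {0,1}" "b i \<in> {0,1}" "a (Suc i) \<in> {0,1}" "b (Suc i) \<in> {0,1}"
        using X_bit[OF a, of i] X_bit[OF b, of i] X_bit[OF a, of "Suc i"] X_bit[OF b, of "Suc i"] i
        by auto
      ultimately have "a i = b i \<longleftrightarrow> a (Suc i) = b (Suc i)"
        using bit2 by blast
      then show ?case using Suc i by (simp add: i_def)
    qed
    have ae: "a e = b e"
    proof (rule ccontr)
      assume ne: "a e \<noteq> b e"
      have 1: "a 1 \<noteq> b 1" using cl[of "e - 1"] ne e2 by auto
      have 2: "a 2 \<noteq> b 2" using cl[of "e - 2"] ne e2 by auto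
      have "(a e + (a 1 + a 2) mod 2) mod 2 = (b e + (b 1 + b 2) mod 2) mod 2"
        using c[of e] e2 by (simp add: th_def I_def md_def)
      then show False
        using bit3[OF X_bit[OF a, of e] X_bit[OF a, of 1] X_bit[OF a, of 2]
             X_bit[OF b, of e] X_bit[OF b, of 1] X_bit[OF b, of 2] ne 1 2] e2 by auto
    qed
    show ?thesis
    proof (rule X_eqI[OF a b])
      fix i assume i: "i \<le> e"
      show "a i = b i"
      proof (cases "i = 0")
        case True then show ?thesis using a0 by simp
      next
        case False then show ?thesis using cl[of "e - i"] i ae by auto
      qed
    qed
  qed
qed

lemma sg_X: "a \<in> X \<Longrightarrow> sg a \<in> X"
  by (simp add: sg_def red_X)

lemma th_bij: "bij_betw th X X" by (rule bij_endo[OF th_X th_inj])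
lemma sg_bij: "bij_betw sg X X" by (rule bij_endo[OF sg_X sg_inj])

definition tr :: "(nat \<Rightarrow> int) \<Rightarrow> (nat \<Rightarrow> int) \<Rightarrow> (nat \<Rightarrow> int)" where "tr w b = red (w + b)"
definition ng :: "(nat \<Rightarrow> int) \<Rightarrow> (nat \<Rightarrow> int)" where "ng b = red (- b)"

lemma tr_bij: "bij_betw (tr w) X X"
proof (rule bij_endo)
  show "tr w a \<in> X" for a by (simp add: tr_def red_X)
  show "inj_on (tr w) X"
  proof (rule inj_onI)
    fix a b assume a: "a \<in> X" and b: "b \<in> X" and eq: "tr w a = tr w b"
    have "red (- w + red (w + a)) = red (- w + red (w + b))" using eq by (simp add: tr_def)
    then have "red a = red b" by (simp add: red_add_right red_diff_left)
    then show "a = b" using red_id a b by simp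
  qed
qed

lemma ng_bij: "bij_betw ng X X"
proof (rule bij_endo)
  show "ng a \<in> X" for a by (simp add: ng_def red_X)
  show "inj_on ng X"
  proof (rule inj_onI)
    fix a b assume a: "a \<in> X" and b: "b \<in> X" and eq: "ng a = ng b"
    have "red (- red (- a)) = red (- red (- b))" using eq by (simp add: ng_def)
    then have "red a = red b" by (simp add: red_neg)
    then show "a = b" using red_id a b by simp
  qed
qed

end


lemma transfer_AOA:
  fixes X :: "'a set" and Y :: "'b set" and R :: "'r set"
    and col :: "'r \<Rightarrow> nat \<Rightarrow> 'a" and lab :: "'r \<Rightarrow> 'b"
  assumes st: "1 \<le> s" "s \<le> t" "t \<le> k"
    and fX: "finite X" and cX: "card X = v" and fY: "finite Y" and cY: "card Y = v ^ (t - s)"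
    and fR: "finite R" and cR: "card R = v ^ t"
    and colX: "\<And>r c. r \<in> R \<Longrightarrow> c < k \<Longrightarrow> col r c \<in> X"
    and labY: "\<And>r. r \<in> R \<Longrightarrow> lab r \<in> Y"
    and OA: "\<And>C f. C \<subseteq> {0..<k} \<Longrightarrow> card C = t \<Longrightarrow> f \<in> C \<rightarrow>\<^sub>E X \<Longrightarrow>
               \<exists>!r. r \<in> R \<and> (\<forall>c\<in>C. col r c = f c)"
    and AO: "\<And>C f y. C \<subseteq> {0..<k} \<Longrightarrow> card C = s \<Longrightarrow> f \<in> C \<rightarrow>\<^sub>E X \<Longrightarrow> y \<in> Y \<Longrightarrow>
               \<exists>!r. r \<in> R \<and> (\<forall>c\<in>C. col r c = f c) \<and> lab r = y"
  shows "\<exists>(X' :: nat set) (Y' :: nat set) (A :: nat \<Rightarrow> nat \<Rightarrow> nat) (L :: nat \<Rightarrow> nat).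
           is_AOA s t k v X' Y' A L"
proof -
  obtain g where g: "bij_betw g {0..<v ^ t} R" using ex_bij_betw_nat_finite[OF fR] cR by metis
  obtain hX where hX: "bij_betw hX X {0..<v}" using ex_bij_betw_finite_nat[OF fX] cX by metis
  obtain hY where hY: "bij_betw hY Y {0..<v ^ (t - s)}" using ex_bij_betw_finite_nat[OF fY] cY by metis
  define A where "A i c = hX (col (g i) c)" for i c
  define L where "L i = hY (lab (g i))" for i
  have gR: "i < v ^ t \<Longrightarrow> g i \<in> R" for i using g by (auto simp: bij_betw_def)
  have hXi: "\<And>a b. a \<in> X \<Longrightarrow> b \<in> X \<Longrightarrow> hX a = hX b \<Longrightarrow> a = b"
    using hX by (auto simp: bij_betw_def inj_on_def)
  have hYi: "\<And>a b. a \<in> Y \<Longrightarrow> b \<in> Y \<Longrightarrow> hY a = hY b \<Longrightarrow> a = b"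
    using hY by (auto simp: bij_betw_def inj_on_def)
  define iX where "iX = inv_into X hX"
  have iX: "n < v \<Longrightarrow> iX n \<in> X \<and> hX (iX n) = n" for n
    using hX unfolding iX_def bij_betw_def
    by (metis atLeastLessThan_iff f_inv_into_f inv_into_into zero_le)
  define iY where "iY = inv_into Y hY"
  have iY: "n < v ^ (t - s) \<Longrightarrow> iY n \<in> Y \<and> hY (iY n) = n" for n
    using hY unfolding iY_def bij_betw_def
    by (metis atLeastLessThan_iff f_inv_into_f inv_into_into zero_le)
  have gsurj: "r \<in> R \<Longrightarrow> \<exists>i<v^t. g i = r" for r
    using g by (metis atLeastLessThan_iff bij_betw_def imageE)
  have ginj: "i < v^t \<Longrightarrow> j < v^t \<Longrightarrow> g i = g j \<Longrightarrow> i = j" for i j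
    using g by (auto simp: bij_betw_def inj_on_def)
  have key: "\<exists>!i. i < v ^ t \<and> (\<forall>c\<in>C. A i c = f c) \<and> P i"
    if C: "C \<subseteq> {0..<k}" and f: "f \<in> C \<rightarrow>\<^sub>E {0..<v}"
      and Pex: "\<And>f'. f' \<in> C \<rightarrow>\<^sub>E X \<Longrightarrow> \<exists>!r. r \<in> R \<and> (\<forall>c\<in>C. col r c = f' c) \<and> Q r"
      and PQ: "\<And>i. i < v ^ t \<Longrightarrow> P i = Q (g i)"
    for C f P Q
  proof -
    define f' where "f' = (\<lambda>c\<in>C. iX (f c))"
    have f'X: "f' \<in> C \<rightarrow>\<^sub>E X" using f iX by (fastforce simp: f'_def PiE_iff)
    obtain r where r: "r \<in> R" "\<forall>c\<in>C. col r c = f' c" "Q r"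
      and run: "\<And>r'. r' \<in> R \<and> (\<forall>c\<in>C. col r' c = f' c) \<and> Q r' \<Longrightarrow> r' = r"
      using Pex[OF f'X] by metis
    obtain i where i: "i < v^t" "g i = r" using gsurj r(1) by blast
    have eqv: "(\<forall>c\<in>C. A j c = f c) \<longleftrightarrow> (\<forall>c\<in>C. col (g j) c = f' c)" if j: "j < v^t" for j
    proof -
      have "A j c = f c \<longleftrightarrow> col (g j) c = f' c" if c: "c \<in> C" for c
      proof -
        have c1: "col (g j) c \<in> X" using colX gR[OF j] C c by auto
        have fc: "f c < v" using f c by auto
        show ?thesis using hXi[OF c1] iX[OF fc] c unfolding A_def f'_def by auto
      qed
      then show ?thesis by blast
    qed
    show ?thesis
    proof (rule ex1I[of _ i])
      show "i < v ^ t \<and> (\<forall>c\<in>C. A i c = f c) \<and> P i" using i r eqv PQ by auto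
    next
      fix j assume j: "j < v ^ t \<and> (\<forall>c\<in>C. A j c = f c) \<and> P j"
      then have "g j = r" using run[of "g j"] eqv PQ gR by auto
      then show "j = i" using ginj j i by auto
    qed
  qed
  have "is_AOA s t k v {0..<v} {0..<v ^ (t - s)} A L"
    unfolding is_AOA_def is_OA_def
  proof (intro conjI allI impI ballI)
    show "1 \<le> t" using st by simp
    show "A i c \<in> {0..<v}" if "i < v ^ t" "c < k" for i c
      using hX colX[OF gR] that unfolding A_def bij_betw_def by auto
    show "L i \<in> {0..<v ^ (t - s)}" if "i < v ^ t" for i
      using hY labY[OF gR] that unfolding L_def bij_betw_def by auto
    show "\<exists>!i. i < v ^ t \<and> (\<forall>c\<in>C. A i c = f c)"
      if "C \<subseteq> {0..<k} \<and> card C = t" "f \<in> C \<rightarrow>\<^sub>E {0..<v}" for C f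
      using key[where C=C and f=f and P="\<lambda>_. True" and Q="\<lambda>_. True"] OA that by auto
    show "\<exists>!i. i < v ^ t \<and> (\<forall>c\<in>C. A i c = f c) \<and> L i = y"
      if "C \<subseteq> {0..<k} \<and> card C = s" "f \<in> C \<rightarrow>\<^sub>E {0..<v}" "y \<in> {0..<v ^ (t - s)}" for C f y
    proof (rule key[where C=C and f=f and P="\<lambda>i. L i = y" and Q="\<lambda>r. lab r = iY y"])
      show "C \<subseteq> {0..<k}" "f \<in> C \<rightarrow>\<^sub>E {0..<v}" using that by auto
      show "\<exists>!r. r \<in> R \<and> (\<forall>c\<in>C. col r c = f' c) \<and> lab r = iY y" if "f' \<in> C \<rightarrow>\<^sub>E X" for f'
        using AO[of C f' "iY y"] that \<open>C \<subseteq> {0..<k} \<and> card C = s\<close> iY \<open>y \<in> _\<close> by auto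
      show "(L i = y) = (lab (g i) = iY y)" if "i < v ^ t" for i
        using hYi[OF labY[OF gR[OF that]]] iY \<open>y \<in> _\<close> unfolding L_def by auto
    qed
  qed (use st fX cX in auto)
  then show ?thesis by blast
qed

locale AK = OM +
  fixes k :: nat
  assumes k3: "k \<ge> 3"
begin

definition phi :: "nat \<Rightarrow> (nat \<Rightarrow> int) \<Rightarrow> (nat \<Rightarrow> int)" where
  "phi j a = (if odd k \<and> j = k - 2 then th a else if even j then a else ng a)"

definition alt :: "nat \<Rightarrow> (nat \<Rightarrow> int) \<Rightarrow> (nat \<Rightarrow> int)" where
  "alt j a = (if even j then a else ng a)"

definition Psi :: "(nat \<Rightarrow> int) \<Rightarrow> (nat \<Rightarrow> int)" where
  "Psi a = red (\<Sum>j\<in>{0..<k-1}. phi j a)"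

lemma phi_bij: "bij_betw (phi j) X X"
proof -
  have "bij_betw (\<lambda>a. a) X X" using bij_betw_id unfolding id_def .
  then show ?thesis unfolding phi_def using th_bij ng_bij
    by (cases "odd k \<and> j = k - 2"; cases "even j") (auto simp: id_def)
qed

lemma phi_X: "a \<in> X \<Longrightarrow> phi j a \<in> X"
  using phi_bij by (auto simp: bij_betw_def)

lemma phi0: "phi 0 a = a"
  using k3 by (simp add: phi_def)

lemma alt_sum: "a \<in> X \<Longrightarrow> red (\<Sum>j\<in>{0..<n}. alt j a) = (if even n then red 0 else a)"
proof (induction n)
  case 0 then show ?case by (simp add: zero_fun_def)
next
  case (Suc n)
  have "red (\<Sum>j\<in>{0..<Suc n}. alt j a) = red (red (\<Sum>j\<in>{0..<n}. alt j a) + alt n a)"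
    by (simp add: red_add_left)
  also have "\<dots> = (if even (Suc n) then red 0 else a)"
  proof (cases "even n")
    case True
    then show ?thesis using Suc by (simp add: alt_def red_add_left red_id)
  next
    case False
    then have "red (red (\<Sum>j\<in>{0..<n}. alt j a) + alt n a) = red (a + red (- a))"
      using Suc by (simp add: alt_def ng_def)
    also have "\<dots> = red 0" by (simp add: red_add_right)
    finally show ?thesis using False by simp
  qed
  finally show ?case .
qed

lemma Psi_eq: assumes a: "a \<in> X" shows "Psi a = (if even k then a else sg a)"
proof (cases "even k")
  case True
  have "Psi a = red (\<Sum>j\<in>{0..<k-1}. alt j a)"
    unfolding Psi_def using True by (intro arg_cong[where f=red] sum.cong) (auto simp: phi_def alt_def)
  also have "\<dots> = a" using alt_sum[OF a, of "k - 1"] True k3 by simp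
  finally show ?thesis using True by simp
next
  case False
  have ks: "{0..<k-1} = insert (k-2) {0..<k-2}" using k3 by auto
  have "Psi a = red (th a + (\<Sum>j\<in>{0..<k-2}. phi j a))"
    unfolding Psi_def ks using False by (simp add: phi_def)
  also have "(\<Sum>j\<in>{0..<k-2}. phi j a) = (\<Sum>j\<in>{0..<k-2}. alt j a)"
    by (rule sum.cong) (auto simp: phi_def alt_def)
  also have "red (th a + (\<Sum>j\<in>{0..<k-2}. alt j a)) = red (th a + red (\<Sum>j\<in>{0..<k-2}. alt j a))"
    by (simp add: red_add_right)
  also have "red (\<Sum>j\<in>{0..<k-2}. alt j a) = a" using alt_sum[OF a, of "k - 2"] False k3 by auto
  also have "red (th a + a) = sg a" by (simp add: sg_def add.commute)
  finally show ?thesis using False by simp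
qed

lemma Psi_bij: "bij_betw Psi X X"
proof -
  have "bij_betw (\<lambda>a. a) X X" using bij_betw_id unfolding id_def .
  then have "bij_betw (\<lambda>a. if even k then a else sg a) X X" using sg_bij by (cases "even k") auto
  then show ?thesis by (rule bij_betw_cong[THEN iffD1, rotated]) (simp add: Psi_eq)
qed

definition R :: "(nat \<Rightarrow> nat \<Rightarrow> int) set" where
  "R = {x \<in> PiE {0..<k} (\<lambda>_. X). red (\<Sum>c\<in>{0..<k}. x c) = red 0}"
definition Y :: "(nat \<Rightarrow> nat \<Rightarrow> int) set" where
  "Y = PiE {0..<k-2} (\<lambda>_. X)"
definition L :: "(nat \<Rightarrow> nat \<Rightarrow> int) \<Rightarrow> (nat \<Rightarrow> nat \<Rightarrow> int)" where
  "L x = (\<lambda>j\<in>{0..<k-2}. red (x (Suc j) - phi (Suc j) (x 0)))"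
definition yy :: "(nat \<Rightarrow> nat \<Rightarrow> int) \<Rightarrow> nat \<Rightarrow> (nat \<Rightarrow> int)" where
  "yy y c = (if c = 0 then 0 else y (c - 1))"
definition B :: "(nat \<Rightarrow> nat \<Rightarrow> int) \<Rightarrow> (nat \<Rightarrow> int) \<Rightarrow> nat \<Rightarrow> (nat \<Rightarrow> int)" where
  "B y a c = red (yy y c + phi c a)"
definition E :: "(nat \<Rightarrow> nat \<Rightarrow> int) \<Rightarrow> (nat \<Rightarrow> int) \<Rightarrow> (nat \<Rightarrow> nat \<Rightarrow> int)" where
  "E y a = (\<lambda>c\<in>{0..<k}. if c < k - 1 then B y a c else red (- (\<Sum>c'\<in>{0..<k-1}. B y a c')))"

lemma E_lt: assumes "c < k - 1" shows "E y a c = B y a c"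
proof -
  have "c < k" using assms by arith
  then show ?thesis using assms by (simp add: E_def)
qed
lemma E_last: "E y a (k - 1) = red (- (\<Sum>c'\<in>{0..<k-1}. B y a c'))"
  using k3 by (simp add: E_def)

lemma k_split: "{0..<k} = insert (k-1) {0..<k-1}" using k3 by auto

lemma E_R: assumes "y \<in> Y" "a \<in> X" shows "E y a \<in> R"
proof -
  have P: "E y a \<in> PiE {0..<k} (\<lambda>_. X)" by (auto simp: E_def B_def red_X)
  define S where "S = (\<Sum>c'\<in>{0..<k-1}. B y a c')"
  have "(\<Sum>c\<in>{0..<k}. E y a c) = E y a (k - 1) + (\<Sum>c\<in>{0..<k-1}. E y a c)"
    unfolding k_split by simp
  also have "(\<Sum>c\<in>{0..<k-1}. E y a c) = S" unfolding S_def by (rule sum.cong) (auto simp: E_def)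
  also have "E y a (k - 1) = red (- S)" unfolding S_def by (rule E_last)
  finally have "red (\<Sum>c\<in>{0..<k}. E y a c) = red (red (- S) + S)" by (rule arg_cong)
  also have "\<dots> = red 0" by (simp add: red_add_left)
  finally show ?thesis using P by (simp add: R_def)
qed

lemma E0: "a \<in> X \<Longrightarrow> E y a 0 = a"
  using k3 by (simp add: E_def B_def yy_def phi0 red_id zero_fun_def[symmetric])

lemma E_L: assumes y: "y \<in> Y" and a: "a \<in> X" shows "L (E y a) = y"
proof (rule ext)
  fix j
  show "L (E y a) j = y j"
  proof (cases "j < k - 2")
    case True
    have yj: "y j \<in> X" using y True by (auto simp: Y_def)
    have "E y a (Suc j) = B y a (Suc j)" using True by (intro E_lt) arith
    then have "L (E y a) j = red (red (y j + phi (Suc j) a) - phi (Suc j) a)"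
      using True E0[OF a] by (simp add: L_def B_def yy_def)
    also have "\<dots> = red (y j)" by (simp add: red_diff_left)
    finally show ?thesis using red_id[OF yj] by simp
  next
    case False then show ?thesis using y by (auto simp: L_def Y_def PiE_iff extensional_def)
  qed
qed

lemma R_X: "x \<in> R \<Longrightarrow> c < k \<Longrightarrow> x c \<in> X"
  by (auto simp: R_def)

lemma L_Y: "x \<in> R \<Longrightarrow> L x \<in> Y"
  by (auto simp: L_def Y_def red_X)

lemma R_E: assumes x: "x \<in> R" shows "x = E (L x) (x 0)"
proof (rule ext)
  fix c
  have x0: "x 0 \<in> X" using R_X[OF x] k3 by auto
  have Bx: "B (L x) (x 0) c = x c" if "c < k - 1" for c
  proof (cases "c = 0")
    case True then show ?thesis using x0 by (simp add: B_def yy_def phi0 red_id zero_fun_def[symmetric])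
  next
    case False
    have "c - 1 < k - 2" using that False by arith
    then have "B (L x) (x 0) c = red (red (x c - phi c (x 0)) + phi c (x 0))"
      using that False by (simp add: B_def yy_def L_def)
    also have "\<dots> = red (x c)" by (simp add: red_add_left)
    finally show ?thesis using red_id R_X[OF x] that by auto
  qed
  show "x c = E (L x) (x 0) c"
  proof (cases "c < k")
    case False then show ?thesis using x by (auto simp: E_def R_def PiE_iff extensional_def)
  next
    case True
    show ?thesis
    proof (cases "c < k - 1")
      case True then show ?thesis using Bx E_lt by simp
    next
      case False
      then have c: "c = k - 1" using \<open>c < k\<close> by auto
      define S where "S = (\<Sum>c'\<in>{0..<k-1}. x c')"
      have "(\<Sum>c'\<in>{0..<k-1}. B (L x) (x 0) c') = S" unfolding S_def by (rule sum.cong) (auto simp: Bx)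
      then have "E (L x) (x 0) c = red (- S)" using c k3 by (simp add: E_def)
      moreover have "red (x (k - 1) + S) = red 0" using x unfolding R_def k_split S_def by simp
      then have "red (red (x (k - 1) + S) - S) = red (red 0 - S)" by simp
      then have "red (x (k - 1)) = red (- S)" by (simp add: red_diff_left)
      ultimately show ?thesis using c red_id R_X[OF x] k3 by auto
    qed
  qed
qed

lemma E_coord_bij: assumes y: "y \<in> Y" and c: "c < k" shows "bij_betw (\<lambda>a. E y a c) X X"
proof (cases "c < k - 1")
  case True
  have "bij_betw (tr (yy y c) \<circ> phi c) X X" by (rule bij_betw_trans[OF phi_bij tr_bij])
  then show ?thesis
    by (rule bij_betw_cong[THEN iffD1, rotated]) (use True c in \<open>simp add: E_def B_def tr_def\<close>)
next
  case False
  then have ck: "c = k - 1" using c by auto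
  define W where "W = (\<Sum>c'\<in>{0..<k-1}. yy y c')"
  have "bij_betw (ng \<circ> (tr W \<circ> Psi)) X X" by (rule bij_betw_trans[OF bij_betw_trans[OF Psi_bij tr_bij] ng_bij])
  moreover have "E y a c = (ng \<circ> (tr W \<circ> Psi)) a" for a
  proof -
    define P where "P = (\<Sum>c'\<in>{0..<k-1}. phi c' a)"
    have "E y a c = red (- (\<Sum>c'\<in>{0..<k-1}. B y a c'))" using ck k3 by (simp add: E_def)
    also have "\<dots> = red (- red (\<Sum>c'\<in>{0..<k-1}. B y a c'))" by (simp add: red_neg)
    also have "red (\<Sum>c'\<in>{0..<k-1}. B y a c') = red (W + P)"
      unfolding B_def red_sum W_def P_def by (simp add: sum.distrib)
    also have "red (- red (W + P)) = red (- red (W + red P))" by (simp add: red_add_right)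
    also have "\<dots> = (ng \<circ> (tr W \<circ> Psi)) a" by (simp add: ng_def tr_def Psi_def P_def)
    finally show ?thesis .
  qed
  ultimately show ?thesis using bij_betw_cong[of X "\<lambda>a. E y a c" "ng \<circ> (tr W \<circ> Psi)" X] by simp
qed

lemma main_L: assumes c: "c < k" and a0: "a0 \<in> X" and y: "y \<in> Y"
  shows "\<exists>!x. x \<in> R \<and> x c = a0 \<and> L x = y"
proof -
  have bj: "bij_betw (\<lambda>a. E y a c) X X" by (rule E_coord_bij[OF y c])
  then obtain a where a: "a \<in> X" "E y a c = a0" using a0 unfolding bij_betw_def by force
  show ?thesis
  proof (rule ex1I[of _ "E y a"])
    show "E y a \<in> R \<and> E y a c = a0 \<and> L (E y a) = y" using E_R[OF y a(1)] a E_L[OF y a(1)] by simp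
  next
    fix x assume x: "x \<in> R \<and> x c = a0 \<and> L x = y"
    have xe: "x = E y (x 0)" using R_E[of x] x by simp
    have x0: "x 0 \<in> X" using R_X[of x 0] x k3 by auto
    have "E y (x 0) c = E y a c" using xe x a by metis
    then have "x 0 = a" using bj x0 a(1) unfolding bij_betw_def inj_on_def by blast
    then show "x = E y a" using xe by simp
  qed
qed

lemma main_OA: assumes C: "C \<subseteq> {0..<k}" and cC: "card C = k - 1" and f: "f \<in> C \<rightarrow>\<^sub>E X"
  shows "\<exists>!x. x \<in> R \<and> (\<forall>c\<in>C. x c = f c)"
proof -
  have "C \<noteq> {0..<k}" using cC k3 by auto
  have "\<exists>m. m < k \<and> m \<notin> C"
  proof (rule ccontr)
    assume "\<not> ?thesis"
    then have "{0..<k} \<subseteq> C" by auto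
    then show False using C \<open>C \<noteq> {0..<k}\<close> by auto
  qed
  then obtain m where m: "m < k" "m \<notin> C" by auto
  have Ceq: "C = {0..<k} - {m}"
  proof (rule card_subset_eq)
    show "finite ({0..<k} - {m})" by simp
    show "C \<subseteq> {0..<k} - {m}" using C m by auto
    show "card C = card ({0..<k} - {m})" using cC m by simp
  qed
  have ins: "{0..<k} = insert m C" using Ceq m by auto
  have fC: "finite C" using Ceq by simp
  define S where "S = (\<Sum>c\<in>C. f c)"
  define x where "x = (\<lambda>c\<in>{0..<k}. if c = m then red (- S) else f c)"
  have sumx: "(\<Sum>c\<in>{0..<k}. z c) = z m + (\<Sum>c\<in>C. z c)" for z :: "nat \<Rightarrow> nat \<Rightarrow> int"
    unfolding ins using fC m by simp
  show ?thesis
  proof (rule ex1I[of _ x])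
    have P: "x \<in> PiE {0..<k} (\<lambda>_. X)" using f Ceq by (auto simp: x_def red_X PiE_iff)
    have sC: "(\<Sum>c\<in>C. x c) = S" unfolding S_def by (rule sum.cong) (use m Ceq in \<open>auto simp: x_def\<close>)
    have xm: "x m = red (- S)" using m by (simp add: x_def)
    have "red (\<Sum>c\<in>{0..<k}. x c) = red (red (- S) + S)" using sumx[of x] xm sC by simp
    then have "red (\<Sum>c\<in>{0..<k}. x c) = red 0" by (simp add: red_add_left)
    then show "x \<in> R \<and> (\<forall>c\<in>C. x c = f c)" using P m Ceq by (auto simp: R_def x_def)
  next
    fix x' assume x': "x' \<in> R \<and> (\<forall>c\<in>C. x' c = f c)"
    have sC': "(\<Sum>c\<in>C. x' c) = S" unfolding S_def by (rule sum.cong) (use x' in auto)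
    have r0: "red (x' m + (\<Sum>c\<in>C. x' c)) = red 0" using x' unfolding R_def sumx by blast
    then have "red (x' m + S) = red 0" unfolding sC' .
    then have "red (red (x' m + S) - S) = red (red 0 - S)" by simp
    then have "red (x' m) = red (- S)" by (simp add: red_diff_left)
    then have xm: "x' m = red (- S)" using red_id R_X x' m by metis
    show "x' = x"
    proof (rule ext)
      fix c show "x' c = x c"
      proof (cases "c < k")
        case True then show ?thesis using xm x' Ceq by (auto simp: x_def)
      next
        case False then show ?thesis using x' by (auto simp: x_def R_def PiE_iff extensional_def)
      qed
    qed
  qed
qed

lemma card_Y: "card Y = card X ^ (k - 2)"
  by (simp add: Y_def card_PiE)

lemma finite_Y: "finite Y"
  using finite_X by (simp add: Y_def finite_PiE)

lemma bij_R: "bij_betw (\<lambda>x. (x 0, L x)) R (X \<times> Y)"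
proof -
  have k0: "0 < k" using k3 by simp
  show ?thesis unfolding bij_betw_def
  proof
    show "inj_on (\<lambda>x. (x 0, L x)) R"
    proof (rule inj_onI)
      fix x x' assume x: "x \<in> R" and x': "x' \<in> R" and eq: "(x 0, L x) = (x' 0, L x')"
      have "\<exists>!w. w \<in> R \<and> w 0 = x 0 \<and> L w = L x" by (rule main_L[OF k0 R_X[OF x k0] L_Y[OF x]])
      then show "x = x'" using x x' eq by auto
    qed
    show "(\<lambda>x. (x 0, L x)) ` R = X \<times> Y"
    proof
      show "(\<lambda>x. (x 0, L x)) ` R \<subseteq> X \<times> Y" using R_X L_Y k0 by auto
      show "X \<times> Y \<subseteq> (\<lambda>x. (x 0, L x)) ` R"
      proof
        fix p assume "p \<in> X \<times> Y"
        then obtain a y where p: "p = (a, y)" "a \<in> X" "y \<in> Y" by auto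
        then obtain w where "w \<in> R \<and> w 0 = a \<and> L w = y" using main_L[OF k0, of a y] by auto
        then show "p \<in> (\<lambda>x. (x 0, L x)) ` R" using p by force
      qed
    qed
  qed
qed

lemma card_R: "card R = card X ^ (k - 1)"
proof -
  have "card R = card (X \<times> Y)" using bij_betw_same_card[OF bij_R] .
  also have "\<dots> = card X * card X ^ (k - 2)" by (simp add: card_cartesian_product card_Y)
  also have "\<dots> = card X ^ (k - 1)"
  proof -
    have "k - 1 = Suc (k - 2)" using k3 by arith
    then show ?thesis by simp
  qed
  finally show ?thesis .
qed

lemma finite_R: "finite R"
proof -
  have "R \<subseteq> PiE {0..<k} (\<lambda>_. X)" by (auto simp: R_def)
  then show ?thesis using finite_X by (meson finite_PiE finite_atLeastLessThan finite_subset)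
qed

theorem AK_AOA: "\<exists>(X' :: nat set) (Y' :: nat set) (A :: nat \<Rightarrow> nat \<Rightarrow> nat) (L' :: nat \<Rightarrow> nat).
           is_AOA 1 (k - 1) k (m * 2 ^ e) X' Y' A L'"
proof (rule transfer_AOA[where X=X and Y=Y and R=R and col="\<lambda>x c. x c" and lab=L])
  show "1 \<le> (1::nat)" "1 \<le> k - 1" "k - 1 \<le> k" using k3 by auto
  show "finite X" "card X = m * 2 ^ e" "finite Y" "finite R" by (rule finite_X, rule card_X, rule finite_Y, rule finite_R)
  show "card Y = (m * 2 ^ e) ^ (k - 1 - 1)" using card_Y card_X by (simp add: diff_diff_left numeral_2_eq_2)
  show "card R = (m * 2 ^ e) ^ (k - 1)" using card_R card_X by simp
  show "\<And>r c. r \<in> R \<Longrightarrow> c < k \<Longrightarrow> r c \<in> X" by (rule R_X)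
  show "\<And>r. r \<in> R \<Longrightarrow> L r \<in> Y" by (rule L_Y)
  show "\<exists>!r. r \<in> R \<and> (\<forall>c\<in>C. r c = f c)"
    if "C \<subseteq> {0..<k}" "card C = k - 1" "f \<in> C \<rightarrow>\<^sub>E X" for C f
    using main_OA that by blast
  show "\<exists>!r. r \<in> R \<and> (\<forall>c\<in>C. r c = f c) \<and> L r = y"
    if C1: "C \<subseteq> {0..<k}" and C2: "card C = 1" and C3: "f \<in> C \<rightarrow>\<^sub>E X" and C4: "y \<in> Y" for C f y
  proof -
    obtain c where c: "C = {c}" using C2 card_1_singletonE by blast
    have ck: "c < k" using C1 c by auto
    have fc: "f c \<in> X" using C3 c by auto
    show ?thesis using main_L[OF ck fc C4] c by simp
  qed
qed

end

lemma decomp2: "0 < (v::nat) \<Longrightarrow> \<exists>e m. v = m * 2 ^ e \<and> odd m"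
proof (induction v rule: less_induct)
  case (less v)
  show ?case
  proof (cases "odd v")
    case True then show ?thesis by (intro exI[of _ 0] exI[of _ v]) simp
  next
    case False
    then obtain w where w: "v = 2 * w" by auto
    then have "0 < w" "w < v" using less.prems by auto
    then obtain e m where "w = m * 2 ^ e" "odd m" using less.IH by blast
    then show ?thesis using w by (intro exI[of _ "Suc e"] exI[of _ m]) simp
  qed
qed

theorem theorem2p3:
  fixes v k :: nat
  assumes "v \<ge> 2" and "k \<ge> 3" and "v mod 4 \<noteq> 2"
  shows "\<exists>(X :: nat set) (Y :: nat set) (A :: nat \<Rightarrow> nat \<Rightarrow> nat) (L :: nat \<Rightarrow> nat).
           is_AOA 1 (k - 1) k v X Y A L"
proof -
  obtain e m where vm: "v = m * 2 ^ e" and mo: "odd m" using decomp2[of v] assms(1) by auto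
  have e1: "e \<noteq> 1"
  proof
    assume "e = 1"
    then have "v = 2 * m" using vm by simp
    moreover obtain j where "m = 2 * j + 1" using mo by (auto elim: oddE)
    ultimately have "v = 4 * j + 2" by simp
    then have "v mod 4 = 2" by presburger
    then show False using assms(3) by simp
  qed
  interpret AK m e k by unfold_locales (use mo e1 assms(2) in auto)
  show ?thesis using AK_AOA vm by simp
qed

end
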